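(* Let $f=\prod_{i=1}^n(y-a_i)\in\overline K[y]$ be reduced ($a_i$ pairwise distinct, $n\ge2$) with $\nu(a_i)>0$ for all $i$. For every $r\in\mathbf Q$ the operator $\nabla$ maps $\overline{\mathcal F}_r$ into itself, and the induced graded map is $\mathrm{gr}_r\nabla=-I-(1+r)(A_{|F})^{-1}$, i.e. for every $w\in\overline{\mathcal F}_r$, $$\mathrm{in}_r(\nabla w)=-\mathrm{in}_r(w)-(1+r)(A_{|F})^{-1}\mathrm{in}_r(w).$$
   Context: $\overline K=\bigcup_{d\ge1}\mathbf C[[x^{1/d}]][1/x]$ with valuation $\nu$; $\partial_x$ and $'$ denote $d/dx$ on $\overline K$ applied coefficientwise. $\overline{\mathcal E}$: polynomials in $y$ over $\overline K$ of degree $<n$, basis $\varepsilon_i=\prod_{j\ne i}(y-a_j)$; $\overline{\mathcal F}=\{\sum u_i\varepsilon_i:\sum u_i=0\}$ (degree $<n-1$). $\mathrm{val}(\sum w_i\varepsilon_i)=\inf\nu(w_i)$; $\overline{\mathcal F}_r=\{w\in\overline{\mathcal F}:\mathrm{val}(w)\ge r\}$; $\mathrm{in}_r(w)\in\mathbf C^n$ is the vector of coefficients of $x^r$ in the $w_i$. For $w\in\overline{\mathcal F}$, the equation $uf'_x+vf'_y=wf$ has a unique solution $(u,v)\in\overline{\mathcal F}\times\overline{\mathcal E}$, and $\nabla w:=-u'_x-v'_y\in\overline{\mathcal F}$. $A$ is the rational matrix with off-diagonal entries $-m_{i,j}$, $m_{i,j}=\nu(a_i-a_j)$, and diagonal entries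 $m_i=\sum_{j\ne i}m_{i,j}$; $F=\{W\in\mathbf C^n:\sum W_i=0\}$; $A_{|F}$ is the (invertible) restriction of $A$ to $F$. *)

theory Defs
  imports "HOL-Computational_Algebra.Computational_Algebra"
begin

(* Puiseux series: an element of \<Union>_d C[[x^(1/d)]][1/x] with a fixed ramification index d
   is represented as a complex Laurent series g(t) in t = x^(1/d), i.e. g(x^(1/d)).
   Indices i range over {..<n} (i.e. 0..n-1). *)

(* d/dx on C((x^(1/d))):  d/dx = 1/(d t^(d-1)) d/dt *)
definition Dx :: "nat \<Rightarrow> complex fls \<Rightarrow> complex fls" where
  "Dx d g = fls_const (1 / of_nat d) * fls_X_intpow (1 - int d) * fls_deriv g"

(* valuation nu (only meaningful for g \<noteq> 0; nu 0 = \<infinity> is handled separately) *)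
definition nu :: "nat \<Rightarrow> complex fls \<Rightarrow> rat" where
  "nu d g = of_int (fls_subdegree g) / of_nat d"

definition xcoeff :: "nat \<Rightarrow> rat \<Rightarrow> complex fls \<Rightarrow> complex" where
  "xcoeff d r g = (if of_int \<lfloor>r * of_nat d\<rfloor> = r * of_nat d then fls_nth g \<lfloor>r * of_nat d\<rfloor> else 0)"

definition fpoly :: "(nat \<Rightarrow> complex fls) \<Rightarrow> nat \<Rightarrow> complex fls poly" where
  "fpoly a n = (\<Prod>j<n. [:- a j, 1:])"

definition eps :: "(nat \<Rightarrow> complex fls) \<Rightarrow> nat \<Rightarrow> nat \<Rightarrow> complex fls poly" where
  "eps a n i = (\<Prod>j\<in>{..<n} - {i}. [:- a j, 1:])"

definition comb :: "(nat \<Rightarrow> complex fls) \<Rightarrow> nat \<Rightarrow> (nat \<Rightarrow> complex fls) \<Rightarrow> complex fls poly" where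
  "comb a n c = (\<Sum>i<n. smult (c i) (eps a n i))"

definition coords :: "(nat \<Rightarrow> complex fls) \<Rightarrow> nat \<Rightarrow> complex fls poly \<Rightarrow> (nat \<Rightarrow> complex fls)" where
  "coords a n p = (THE c. (\<forall>i. n \<le> i \<longrightarrow> c i = 0) \<and> p = comb a n c)"

(* (u,v) in Fbar x Ebar solves u f'_x + v f'_y = w f *)
definition isSol :: "nat \<Rightarrow> (nat \<Rightarrow> complex fls) \<Rightarrow> nat \<Rightarrow> (nat \<Rightarrow> complex fls)
     \<Rightarrow> (nat \<Rightarrow> complex fls) \<Rightarrow> complex fls poly \<Rightarrow> bool" where
  "isSol d a n w u v \<longleftrightarrow>
     (\<forall>i. n \<le> i \<longrightarrow> u i = 0) \<and> (\<Sum>i<n. u i) = 0 \<and> degree v < n \<and>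
     comb a n u * map_poly (Dx d) (fpoly a n) + v * pderiv (fpoly a n) = comb a n w * fpoly a n"

(* nabla w = - u'_x - v'_y, as coordinate vector *)
definition nabla :: "nat \<Rightarrow> (nat \<Rightarrow> complex fls) \<Rightarrow> nat \<Rightarrow> (nat \<Rightarrow> complex fls) \<Rightarrow> (nat \<Rightarrow> complex fls)" where
  "nabla d a n w = (case (THE uv. isSol d a n w (fst uv) (snd uv)) of (u, v) \<Rightarrow>
      coords a n (- map_poly (Dx d) (comb a n u) - pderiv v))"

definition inFr :: "nat \<Rightarrow> nat \<Rightarrow> rat \<Rightarrow> (nat \<Rightarrow> complex fls) \<Rightarrow> bool" where
  "inFr d n r c \<longleftrightarrow> (\<Sum>i<n. c i) = 0 \<and> (\<forall>i<n. c i \<noteq> 0 \<longrightarrow> r \<le> nu d (c i))"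

definition in_r :: "nat \<Rightarrow> nat \<Rightarrow> rat \<Rightarrow> (nat \<Rightarrow> complex fls) \<Rightarrow> (nat \<Rightarrow> complex)" where
  "in_r d n r c = (\<lambda>i. if i < n then xcoeff d r (c i) else 0)"

definition Amat :: "nat \<Rightarrow> (nat \<Rightarrow> complex fls) \<Rightarrow> nat \<Rightarrow> nat \<Rightarrow> nat \<Rightarrow> rat" where
  "Amat d a n i j = (if i = j then (\<Sum>k\<in>{..<n} - {i}. nu d (a i - a k)) else - nu d (a i - a j))"

definition AFinv :: "nat \<Rightarrow> (nat \<Rightarrow> complex fls) \<Rightarrow> nat \<Rightarrow> (nat \<Rightarrow> complex) \<Rightarrow> (nat \<Rightarrow> complex)" where
  "AFinv d a n W = (THE V. (\<forall>i. n \<le> i \<longrightarrow> V i = 0) \<and> (\<Sum>i<n. V i) = 0 \<and>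
       (\<forall>i<n. (\<Sum>j<n. of_rat (Amat d a n i j) * V j) = W i))"

end

theory Submission
  imports Defs "Jordan_Normal_Form.Determinant"
begin


lemma lap_colsum:
  fixes b :: "nat \<Rightarrow> nat \<Rightarrow> 'k::comm_ring_1"
  assumes sym: "\<And>j k. b j k = b k j"
  shows "(\<Sum>j<n. \<Sum>k<n. b j k * (c j - c k)) = 0"
proof -
  have "(\<Sum>j<n. \<Sum>k<n. b j k * (c j - c k)) = (\<Sum>j<n. \<Sum>k<n. b j k * c j) - (\<Sum>j<n. \<Sum>k<n. b j k * c k)"
    by (simp add: right_diff_distrib sum_subtractf)
  also have "(\<Sum>j<n. \<Sum>k<n. b j k * c k) = (\<Sum>k<n. \<Sum>j<n. b j k * c k)"
    by (rule sum.swap)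
  also have "\<dots> = (\<Sum>j<n. \<Sum>k<n. b j k * c j)"
    using sym by simp
  finally show ?thesis by simp
qed

lemma lap_solve:
  fixes b :: "nat \<Rightarrow> nat \<Rightarrow> 'k::field_char_0" and w :: "nat \<Rightarrow> 'k"
  assumes sym: "\<And>j k. b j k = b k j" and n: "n > 0"
  and inj: "\<And>c. (\<Sum>k<n. c k) = 0 \<Longrightarrow> (\<forall>j<n. (\<Sum>k<n. b j k * (c j - c k)) = 0) \<Longrightarrow> \<forall>j<n. c j = 0"
  and sw: "(\<Sum>j<n. w j) = 0"
  shows "\<exists>c. (\<forall>i. n \<le> i \<longrightarrow> c i = 0) \<and> (\<Sum>k<n. c k) = 0 \<and> (\<forall>j<n. (\<Sum>k<n. b j k * (c j - c k)) = w j)"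
proof -
  define M :: "'k mat" where "M = mat n n (\<lambda>(j,k). (if j = k then (\<Sum>l<n. b j l) else 0) - b j k + 1)"
  have Mc: "M \<in> carrier_mat n n" unfolding M_def by simp
  have Mv: "(M *\<^sub>v v) $ j = (\<Sum>k<n. b j k * (v $ j - v $ k)) + (\<Sum>k<n. v $ k)"
    if "v \<in> carrier_vec n" "j < n" for v j
  proof -
    have "(M *\<^sub>v v) $ j = (\<Sum>k<n. ((if j = k then (\<Sum>l<n. b j l) else 0) - b j k + 1) * v $ k)"
      using that Mc unfolding M_def
      by (auto simp: scalar_prod_def atLeast0LessThan intro!: sum.cong)
    also have "\<dots> = (\<Sum>k<n. (if j = k then (\<Sum>l<n. b j l) else 0) * v $ k) - (\<Sum>k<n. b j k * v $ k) + (\<Sum>k<n. v $ k)"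
      by (simp add: algebra_simps sum.distrib sum_subtractf)
    also have "(\<Sum>k<n. (if j = k then (\<Sum>l<n. b j l) else 0) * v $ k) = (\<Sum>l<n. b j l) * v $ j"
    proof -
      have "(\<Sum>k<n. (if j = k then (\<Sum>l<n. b j l) else 0) * v $ k) = (\<Sum>k<n. if j = k then (\<Sum>l<n. b j l) * v $ k else 0)"
        by (rule sum.cong) auto
      also have "\<dots> = (\<Sum>l<n. b j l) * v $ j" using that by (simp add: sum.delta)
      finally show ?thesis .
    qed
    finally show ?thesis
      by (simp add: right_diff_distrib sum_subtractf sum_distrib_right)
  qed
  have key: "(\<Sum>k<n. c k) = 0 \<and> (\<forall>j<n. (\<Sum>k<n. b j k * (c j - c k)) = t j)"
    if h: "\<forall>j<n. (\<Sum>k<n. b j k * (c j - c k)) + (\<Sum>k<n. c k) = t j" and st: "(\<Sum>j<n. t j) = 0" for c t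
  proof -
    have "(\<Sum>j<n. t j) = (\<Sum>j<n. (\<Sum>k<n. b j k * (c j - c k)) + (\<Sum>k<n. c k))"
      using h by simp
    also have "\<dots> = of_nat n * (\<Sum>k<n. c k)"
      using lap_colsum[OF sym, where n=n and c=c] by (simp add: sum.distrib)
    finally have "(\<Sum>k<n. c k) = 0" using st n by simp
    thus ?thesis using h by simp
  qed
  have "det M \<noteq> 0"
  proof
    assume "det M = 0"
    then obtain v where v: "v \<in> carrier_vec n" "v \<noteq> 0\<^sub>v n" "M *\<^sub>v v = 0\<^sub>v n"
      using det_0_iff_vec_prod_zero_field[OF Mc] by blast
    define c where "c k = v $ k" for k
    have "\<forall>j<n. (\<Sum>k<n. b j k * (c j - c k)) + (\<Sum>k<n. c k) = (\<lambda>_. 0) j"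
      using Mv[OF v(1)] v(3) unfolding c_def by (metis index_zero_vec(1))
    from key[OF this] have "\<forall>j<n. c j = 0" using inj by simp
    hence "v = 0\<^sub>v n" using v(1) unfolding c_def by (intro eq_vecI) auto
    with v(2) show False by simp
  qed
  from det_non_zero_imp_unit[OF Mc this, of "()"]
  obtain B where B: "B \<in> carrier_mat n n" "M * B = 1\<^sub>m n"
    unfolding Units_def ring_mat_def by auto
  define v where "v = B *\<^sub>v vec n w"
  have vc: "v \<in> carrier_vec n" unfolding v_def using B by simp
  have Mvw: "M *\<^sub>v v = vec n w"
    unfolding v_def using B Mc by (simp flip: assoc_mult_mat_vec)
  define c where "c k = (if k < n then v $ k else 0)" for k
  have "\<forall>j<n. (\<Sum>k<n. b j k * (c j - c k)) + (\<Sum>k<n. c k) = w j"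
    using Mv[OF vc] Mvw unfolding c_def by simp
  from key[OF this sw] show ?thesis
    by (intro exI[of _ c]) (auto simp: c_def)
qed




hide_const (open) Module.module.smult

definition vb :: "int \<Rightarrow> complex fls \<Rightarrow> bool" where
  "vb N f \<longleftrightarrow> (\<forall>k<N. fls_nth f k = 0)"

lemma vb_mult: assumes "vb a f" "vb b g" shows "vb (a+b) (f*g)"
proof (cases "f = 0 \<or> g = 0")
  case True thus ?thesis by (auto simp: vb_def)
next
  case False
  hence "a \<le> fls_subdegree f" "b \<le> fls_subdegree g"
    using assms by (auto simp: vb_def intro!: fls_subdegree_geI)
  thus ?thesis unfolding vb_def by (auto intro!: fls_times_nth_eq0)
qed

lemma vb_mono: "vb N f \<Longrightarrow> M \<le> N \<Longrightarrow> vb M f"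
  by (auto simp: vb_def)

lemma vb_add: "vb N f \<Longrightarrow> vb N g \<Longrightarrow> vb N (f + g)"
  by (auto simp: vb_def)
lemma vb_diff: "vb N f \<Longrightarrow> vb N g \<Longrightarrow> vb N (f - g)"
  by (auto simp: vb_def)
lemma vb_uminus: "vb N f \<Longrightarrow> vb N (- f)"
  by (auto simp: vb_def)
lemma vb_zero[simp]: "vb N 0"
  by (auto simp: vb_def)
lemma vb_subdeg: "vb (fls_subdegree f) f"
  by (auto simp: vb_def)
lemma vb_le_subdeg: "f \<noteq> 0 \<Longrightarrow> vb N f \<Longrightarrow> N \<le> fls_subdegree f"
  by (auto simp: vb_def intro!: fls_subdegree_geI)
lemma vb_all_zero: assumes "\<And>N. vb N f" shows "f = 0"
proof (rule ccontr)
  assume "f \<noteq> 0"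
  hence "fls_nth f (fls_subdegree f) \<noteq> 0" by simp
  with assms[of "fls_subdegree f + 1"] show False by (auto simp: vb_def)
qed

lemma Dx_nth: "fls_nth (Dx d g) k = of_int (k + int d) / of_nat d * fls_nth g (k + int d)"
proof -
  have "Dx d g = fls_const (1 / of_nat d) * (fls_X_intpow (1 - int d) * fls_deriv g)"
    by (simp add: Dx_def mult.assoc)
  also have "fls_X_intpow (1 - int d) * fls_deriv g = fls_shift (int d - 1) (fls_deriv g)"
    by (subst fls_X_intpow_times_conv_shift) simp
  finally have e: "Dx d g = fls_const (1 / of_nat d) * fls_shift (int d - 1) (fls_deriv g)" .
  have k: "k + (int d - 1) + 1 = k + int d" by simp
  show ?thesis unfolding e fls_mult_const_nth fls_shift_nth fls_deriv_nth k by simp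
qed

lemma Dx_add: "Dx d (f + g) = Dx d f + Dx d g"
  by (simp add: Dx_def algebra_simps)
lemma Dx_diff: "Dx d (f - g) = Dx d f - Dx d g"
  by (simp add: Dx_def algebra_simps)
lemma Dx_minus: "Dx d (- f) = - Dx d f"
  by (simp add: Dx_def algebra_simps)
lemma Dx_zero[simp]: "Dx d 0 = 0"
  by (simp add: Dx_def)
lemma Dx_mult: "Dx d (f * g) = Dx d f * g + f * Dx d g"
  by (simp add: Dx_def algebra_simps)
lemma Dx_sum: "Dx d (\<Sum>i\<in>A. f i) = (\<Sum>i\<in>A. Dx d (f i))"
  by (simp add: Dx_def fls_deriv_sum sum_distrib_left)

lemma of_rat_nu: "(of_rat (nu d g) :: complex) = of_int (fls_subdegree g) / of_nat d"
  by (simp add: nu_def of_rat_divide)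

lemma beta_decomp:
  assumes d: "d > 0" and g: "g \<noteq> 0"
  shows "vb 1 (fls_X_intpow (int d) * (Dx d g / g) - fls_const (of_rat (nu d g)))"
proof -
  define s where "s = fls_subdegree g"
  define e where "e = fls_X_intpow (int d) * (Dx d g / g) - fls_const (of_rat (nu d g))"
  have eg: "e * g = fls_X_intpow (int d) * Dx d g - fls_const (of_rat (nu d g)) * g"
    using g unfolding e_def by (simp add: algebra_simps)
  have "vb (s+1) (e * g)"
    unfolding vb_def
  proof (intro allI impI)
    fix k assume k: "k < s + 1"
    have "fls_nth (e * g) k = (of_int k / of_nat d - of_int s / of_nat d) * fls_nth g k"
      unfolding eg using d
      by (simp add: fls_X_intpow_times_conv_shift Dx_nth of_rat_nu s_def algebra_simps)
    also have "\<dots> = 0"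
    proof (cases "k < s")
      case True thus ?thesis by (simp add: s_def)
    next
      case False with k have "k = s" by simp
      thus ?thesis by simp
    qed
    finally show "fls_nth (e * g) k = 0" .
  qed
  show ?thesis
  proof (cases "e = 0")
    case True thus ?thesis by (simp add: e_def)
  next
    case False
    hence "e * g \<noteq> 0" using g by simp
    from vb_le_subdeg[OF this \<open>vb (s+1) (e*g)\<close>] False g
    have "1 \<le> fls_subdegree e" by (simp add: s_def)
    hence "vb 1 e" by (auto simp: vb_def)
    thus ?thesis by (simp add: e_def)
  qed
qed

lemma cr_rat: "(of_rat q :: complex) = of_real (of_rat q)"
proof (cases q)
  case (Fract a b)
  hence "b \<noteq> 0" by simp
  have 1: "(of_rat (Rat.Fract a b) :: complex) = of_int a / of_int b" by (rule of_rat_rat) fact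
  have 2: "(of_rat (Rat.Fract a b) :: real) = of_int a / of_int b" by (rule of_rat_rat) fact
  show ?thesis unfolding Fract 1 2 by simp
qed

lemma real_lap_const:
  fixes x :: "nat \<Rightarrow> real" and mr :: "nat \<Rightarrow> nat \<Rightarrow> real"
  assumes pos: "\<forall>j<n. \<forall>k<n. j \<noteq> k \<longrightarrow> mr j k > 0"
  and h: "\<forall>j<n. (\<Sum>k<n. mr j k * (x j - x k)) = 0"
  and n: "n > 0"
  shows "\<exists>j0<n. \<forall>k<n. x k = x j0"
proof -
  have "Max (x ` {..<n}) \<in> x ` {..<n}" using n by (intro Max_in) auto
  then obtain j0 where j0: "j0 < n" "x j0 = Max (x ` {..<n})" by auto
  have le: "x k \<le> x j0" if "k < n" for k using j0 that by simp
  have nn: "\<forall>k\<in>{..<n}. 0 \<le> mr j0 k * (x j0 - x k)"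
  proof
    fix k assume k: "k \<in> {..<n}"
    show "0 \<le> mr j0 k * (x j0 - x k)"
    proof (cases "k = j0")
      case True thus ?thesis by simp
    next
      case False
      hence "mr j0 k > 0" using pos j0(1) k by blast
      thus ?thesis using le[of k] k by simp
    qed
  qed
  have "\<forall>k\<in>{..<n}. mr j0 k * (x j0 - x k) = 0"
  proof -
    have s0: "(\<Sum>k<n. mr j0 k * (x j0 - x k)) = 0" using h j0 by blast
    show ?thesis using sum_nonneg_eq_0_iff[of "{..<n}" "\<lambda>k. mr j0 k * (x j0 - x k)"] nn s0 by blast
  qed
  hence "\<forall>k<n. x k = x j0"
  proof (intro allI impI)
    fix k assume k: "k < n" and z: "\<forall>k\<in>{..<n}. mr j0 k * (x j0 - x k) = 0"
    show "x k = x j0"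
    proof (cases "k = j0")
      case False
      hence "mr j0 k > 0" using pos j0(1) k by blast
      hence "mr j0 k \<noteq> 0" by simp
      moreover have "mr j0 k * (x j0 - x k) = 0" using z k by blast
      ultimately show ?thesis by simp
    qed simp
  qed
  with j0 show ?thesis by blast
qed

lemma A_inj:
  fixes m :: "nat \<Rightarrow> nat \<Rightarrow> rat" and c :: "nat \<Rightarrow> complex"
  assumes pos: "\<forall>j<n. \<forall>k<n. j \<noteq> k \<longrightarrow> m j k > 0"
  and sc: "(\<Sum>k<n. c k) = 0"
  and h: "\<forall>j<n. (\<Sum>k<n. of_rat (m j k) * (c j - c k)) = (0::complex)"
  shows "\<forall>j<n. c j = 0"
proof (cases "n = 0")
  case True thus ?thesis by simp
next
  case False
  define mr where "mr j k = (of_rat (m j k) :: real)" for j k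
  have posr: "\<forall>j<n. \<forall>k<n. j \<noteq> k \<longrightarrow> mr j k > 0" using pos by (simp add: mr_def)
  have h': "(\<Sum>k<n. of_real (mr j k) * (c j - c k)) = (0::complex)" if j: "j < n" for j
  proof -
    have "(\<Sum>k<n. of_real (mr j k) * (c j - c k)) = (\<Sum>k<n. of_rat (m j k) * (c j - c k))"
      unfolding mr_def by (simp only: cr_rat)
    thus ?thesis using h j by simp
  qed
  have hRe: "\<forall>j<n. (\<Sum>k<n. mr j k * (Re (c j) - Re (c k))) = 0"
  proof (intro allI impI)
    fix j assume j: "j < n"
    have "Re (\<Sum>k<n. of_real (mr j k) * (c j - c k)) = (\<Sum>k<n. mr j k * (Re (c j) - Re (c k)))"
      by (simp add: Re_sum)
    thus "(\<Sum>k<n. mr j k * (Re (c j) - Re (c k))) = 0" using h'[OF j] by simp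
  qed
  have hIm: "\<forall>j<n. (\<Sum>k<n. mr j k * (Im (c j) - Im (c k))) = 0"
  proof (intro allI impI)
    fix j assume j: "j < n"
    have "Im (\<Sum>k<n. of_real (mr j k) * (c j - c k)) = (\<Sum>k<n. mr j k * (Im (c j) - Im (c k)))"
      by (simp add: Im_sum)
    thus "(\<Sum>k<n. mr j k * (Im (c j) - Im (c k))) = 0" using h'[OF j] by simp
  qed
  have zero: "\<forall>j<n. x j = 0" if hx: "\<forall>j<n. (\<Sum>k<n. mr j k * (x j - x k)) = 0"
     and sx: "(\<Sum>k<n. x k) = 0" for x :: "nat \<Rightarrow> real"
  proof -
    obtain j0 where j0: "j0 < n" "\<forall>k<n. x k = x j0"
      using real_lap_const[OF posr hx] False by auto
    have "(\<Sum>k<n. x k) = (\<Sum>k<n. x j0)" by (rule sum.cong[OF refl]) (use j0(2) in blast)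
    hence "(\<Sum>k<n. x k) = of_nat n * x j0" by simp
    hence "of_nat n * x j0 = 0" using sx by simp
    hence "x j0 = 0" using False by simp
    thus ?thesis using j0(2) by simp
  qed
  have sRe: "(\<Sum>k<n. Re (c k)) = 0" using sc by (simp flip: Re_sum)
  have sIm: "(\<Sum>k<n. Im (c k)) = 0" using sc by (simp flip: Im_sum)
  show ?thesis using zero[OF hRe sRe] zero[OF hIm sIm] by (simp add: complex_eq_iff)
qed




lemma coef_lemma:
  fixes beta :: "nat \<Rightarrow> nat \<Rightarrow> complex fls" and m :: "nat \<Rightarrow> nat \<Rightarrow> rat"
  assumes dec: "\<forall>j<n. \<forall>k<n. vb 1 (beta j k - fls_const (of_rat (m j k)))"
  and uv: "\<forall>k<n. vb N (u k)" and j: "j < n"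
  shows "fls_nth (\<Sum>k<n. beta j k * (u j - u k)) N = (\<Sum>k<n. of_rat (m j k) * (fls_nth (u j) N - fls_nth (u k) N))"
  unfolding fls_nth_sum
proof (rule sum.cong[OF refl])
  fix k assume k: "k \<in> {..<n}"
  define e where "e = beta j k - fls_const (of_rat (m j k))"
  have be: "beta j k = e + fls_const (of_rat (m j k))" by (simp add: e_def)
  have "vb (1 + N) (e * (u j - u k))"
    using dec j k uv by (intro vb_mult vb_diff) (auto simp: e_def)
  hence "fls_nth (e * (u j - u k)) N = 0" by (simp add: vb_def)
  thus "fls_nth (beta j k * (u j - u k)) N = of_rat (m j k) * (fls_nth (u j) N - fls_nth (u k) N)"
    unfolding be distrib_right by simp
qed

lemma val_key:
  fixes beta :: "nat \<Rightarrow> nat \<Rightarrow> complex fls" and m :: "nat \<Rightarrow> nat \<Rightarrow> rat" and u g :: "nat \<Rightarrow> complex fls"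
  assumes dec: "\<forall>j<n. \<forall>k<n. vb 1 (beta j k - fls_const (of_rat (m j k)))"
  and inj: "\<And>c. (\<Sum>k<n. c k) = 0 \<Longrightarrow> (\<forall>j<n. (\<Sum>k<n. of_rat (m j k) * (c j - c k)) = (0::complex)) \<Longrightarrow> \<forall>j<n. c j = 0"
  and su: "(\<Sum>k<n. u k) = 0"
  and eq: "\<forall>j<n. (\<Sum>k<n. beta j k * (u j - u k)) = g j"
  and gv: "\<forall>j<n. vb M (g j)"
  shows "\<forall>k<n. vb M (u k)"
proof -
  have step: "\<forall>k<n. vb (N+1) (u k)" if IH: "\<forall>k<n. vb N (u k)" and NM: "N < M" for N
  proof -
    define c where "c k = fls_nth (u k) N" for k
    have sc: "(\<Sum>k<n. c k) = 0" using su unfolding c_def by (simp flip: fls_nth_sum)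
    have "\<forall>j<n. (\<Sum>k<n. of_rat (m j k) * (c j - c k)) = (0::complex)"
    proof (intro allI impI)
      fix j assume j: "j < n"
      have "(\<Sum>k<n. of_rat (m j k) * (c j - c k)) = fls_nth (g j) N"
        using coef_lemma[OF dec IH j] eq j unfolding c_def by simp
      also have "\<dots> = 0" using gv j NM by (simp add: vb_def)
      finally show "(\<Sum>k<n. of_rat (m j k) * (c j - c k)) = (0::complex)" .
    qed
    from inj[OF sc this] have "\<forall>k<n. c k = 0" .
    thus ?thesis using IH unfolding vb_def c_def
      by (metis zless_add1_eq)
  qed
  define N0 where "N0 = - (\<Sum>k<n. \<bar>fls_subdegree (u k)\<bar>)"
  have base: "\<forall>k<n. vb N0 (u k)"
  proof (intro allI impI)
    fix k assume k: "k < n"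
    have "\<bar>fls_subdegree (u k)\<bar> \<le> (\<Sum>k<n. \<bar>fls_subdegree (u k)\<bar>)"
      using k by (intro member_le_sum) auto
    hence "N0 \<le> fls_subdegree (u k)" unfolding N0_def by linarith
    thus "vb N0 (u k)" using vb_subdeg vb_mono by blast
  qed
  have ind: "N0 + int i \<le> M \<longrightarrow> (\<forall>k<n. vb (N0 + int i) (u k))" for i
  proof (induction i)
    case 0 thus ?case using base by simp
  next
    case (Suc i)
    show ?case
    proof
      assume "N0 + int (Suc i) \<le> M"
      hence "N0 + int i < M" by simp
      with Suc step[of "N0 + int i"] have "\<forall>k<n. vb (N0 + int i + 1) (u k)" by simp
      show "\<forall>k<n. vb (N0 + int (Suc i)) (u k)" proof -
        have "N0 + int (Suc i) = N0 + int i + 1" by simp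
        thus ?thesis using \<open>\<forall>k<n. vb (N0 + int i + 1) (u k)\<close> by metis
      qed
    qed
  qed
  show ?thesis
  proof (cases "N0 \<le> M")
    case True
    from ind[of "nat (M - N0)"] True show ?thesis by simp
  next
    case False
    thus ?thesis using base vb_mono by (meson linear)
  qed
qed




definition eps2 :: "(nat \<Rightarrow> complex fls) \<Rightarrow> nat \<Rightarrow> nat \<Rightarrow> nat \<Rightarrow> complex fls poly" where
  "eps2 a n i k = (\<Prod>j\<in>{..<n} - {i,k}. [:- a j, 1:])"

definition PD :: "nat \<Rightarrow> complex fls poly \<Rightarrow> complex fls poly" where
  "PD d p = map_poly (Dx d) p"

lemma eps2_sym: "eps2 a n i k = eps2 a n k i"
  unfolding eps2_def by (simp add: insert_commute)

lemma fpoly_split: "i < n \<Longrightarrow> fpoly a n = [:- a i, 1:] * eps a n i"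
  unfolding fpoly_def eps_def by (subst prod.remove[of _ i]) auto

lemma eps_split: "i < n \<Longrightarrow> k < n \<Longrightarrow> i \<noteq> k \<Longrightarrow> eps a n i = [:- a k, 1:] * eps2 a n i k"
proof -
  assume h: "i < n" "k < n" "i \<noteq> k"
  have "{..<n} - {i} - {k} = {..<n} - {i,k}" by auto
  thus ?thesis using h unfolding eps_def eps2_def by (subst prod.remove[of _ k]) auto
qed

lemma eps_mult: "i < n \<Longrightarrow> k < n \<Longrightarrow> i \<noteq> k \<Longrightarrow> eps a n i * eps a n k = fpoly a n * eps2 a n i k"
proof -
  assume h: "i < n" "k < n" "i \<noteq> k"
  have 1: "eps a n i = [:- a k, 1:] * eps2 a n i k" using eps_split h by blast
  have 2: "eps a n k = [:- a i, 1:] * eps2 a n i k" using eps_split[of k n i a] h eps2_sym[of a n i k] by simp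
  have 3: "fpoly a n = [:- a i, 1:] * eps a n i" using fpoly_split h by blast
  show ?thesis unfolding 3 1 2 by (simp only: mult.assoc mult.commute mult.left_commute)
qed

lemma eps_diff: "i < n \<Longrightarrow> k < n \<Longrightarrow> i \<noteq> k \<Longrightarrow> eps a n i - eps a n k = smult (a i - a k) (eps2 a n i k)"
proof -
  assume h: "i < n" "k < n" "i \<noteq> k"
  have 1: "eps a n i = [:- a k, 1:] * eps2 a n i k" using eps_split h by blast
  have 2: "eps a n k = [:- a i, 1:] * eps2 a n i k" using eps_split[of k n i a] h eps2_sym[of a n i k] by simp
  have "eps a n i - eps a n k = ([:- a k, 1:] - [:- a i, 1:]) * eps2 a n i k"
    unfolding 1 2 by (simp only: left_diff_distrib)
  also have "[:- a k, 1:] - [:- a i, 1:] = [:a i - a k:]" by simp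
  finally show ?thesis by simp
qed

lemma poly_eps_other: "i < n \<Longrightarrow> j < n \<Longrightarrow> j \<noteq> i \<Longrightarrow> poly (eps a n i) (a j) = 0"
  unfolding eps_def poly_prod by (rule prod_zero) auto

lemma poly_eps_self:
  assumes dist: "\<forall>i<n. \<forall>j<n. i \<noteq> j \<longrightarrow> a i \<noteq> a j" and j: "j < n"
  shows "poly (eps a n j) (a j) \<noteq> 0"
  unfolding eps_def poly_prod using dist j by (auto simp: prod_zero_iff)

lemma poly_fpoly: "j < n \<Longrightarrow> poly (fpoly a n) (a j) = 0"
  by (simp add: fpoly_split[of j n a])

lemma degree_eps: "i < n \<Longrightarrow> degree (eps a n i) < n"
proof -
  assume i: "i < n"
  have "degree (eps a n i) \<le> (\<Sum>j\<in>{..<n} - {i}. degree [:- a j, 1:])"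
    unfolding eps_def using degree_prod_sum_le[of "{..<n} - {i}" "\<lambda>j. [:- a j, 1:]"] by (simp add: o_def)
  also have "\<dots> = card ({..<n} - {i})" by simp
  also have "\<dots> < n" using i by simp
  finally show ?thesis .
qed

lemma degree_comb: "n > 0 \<Longrightarrow> degree (comb a n c) < n"
proof -
  assume n: "n > 0"
  have "degree (comb a n c) \<le> n - 1"
    unfolding comb_def
  proof (rule degree_sum_le)
    fix i assume "i \<in> {..<n}"
    hence "degree (eps a n i) < n" by (simp add: degree_eps)
    thus "degree (smult (c i) (eps a n i)) \<le> n - 1" using degree_smult_le[of "c i" "eps a n i"] by linarith
  qed simp
  thus ?thesis using n by linarith
qed

lemma poly_comb: "j < n \<Longrightarrow> poly (comb a n c) (a j) = c j * poly (eps a n j) (a j)"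
proof -
  assume j: "j < n"
  have "poly (comb a n c) (a j) = (\<Sum>i<n. c i * poly (eps a n i) (a j))"
    unfolding comb_def poly_sum by simp
  also have "\<dots> = c j * poly (eps a n j) (a j) + (\<Sum>i\<in>{..<n} - {j}. c i * poly (eps a n i) (a j))"
    using j by (subst sum.remove[of _ j]) auto
  also have "(\<Sum>i\<in>{..<n} - {j}. c i * poly (eps a n i) (a j)) = 0"
    using j by (intro sum.neutral) (auto simp: poly_eps_other)
  finally show ?thesis by simp
qed

lemma comb_inj:
  assumes dist: "\<forall>i<n. \<forall>j<n. i \<noteq> j \<longrightarrow> a i \<noteq> a j" and e: "comb a n c = comb a n c'" and j: "j < n"
  shows "c j = c' j"
  using arg_cong[OF e, of "\<lambda>p. poly p (a j)"] poly_comb[OF j] poly_eps_self[OF dist j] by simp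

lemma pderiv_fpoly: "pderiv (fpoly a n) = (\<Sum>k<n. eps a n k)"
  unfolding fpoly_def eps_def pderiv_prod by (simp add: pderiv_pCons)

lemma pderiv_eps: "i < n \<Longrightarrow> pderiv (eps a n i) = (\<Sum>k\<in>{..<n} - {i}. eps2 a n i k)"
proof -
  assume i: "i < n"
  have "pderiv (eps a n i) = (\<Sum>k\<in>{..<n} - {i}. (\<Prod>j\<in>{..<n} - {i} - {k}. [:- a j, 1:]))"
    unfolding eps_def pderiv_prod by (simp add: pderiv_pCons)
  also have "\<dots> = (\<Sum>k\<in>{..<n} - {i}. eps2 a n i k)"
    unfolding eps2_def by (intro sum.cong) (auto intro!: prod.cong)
  finally show ?thesis .
qed

lemma Dx_one: "Dx d 1 = 0"
  by (simp add: Dx_def)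

lemma coeff_PD: "coeff (PD d p) k = Dx d (coeff p k)"
  unfolding PD_def by (simp add: coeff_map_poly)

lemma PD_add: "PD d (p + q) = PD d p + PD d q"
  by (rule poly_eqI) (simp add: coeff_PD Dx_add)

lemma PD_diff: "PD d (p - q) = PD d p - PD d q"
  by (rule poly_eqI) (simp add: coeff_PD Dx_diff)

lemma PD_minus: "PD d (- p) = - PD d p"
  by (rule poly_eqI) (simp add: coeff_PD Dx_minus)

lemma PD_sum: "PD d (\<Sum>i\<in>A. f i) = (\<Sum>i\<in>A. PD d (f i))"
  by (rule poly_eqI) (simp add: coeff_PD coeff_sum Dx_sum)

lemma PD_mult: "PD d (p * q) = PD d p * q + p * PD d q"
proof (rule poly_eqI)
  fix k
  show "coeff (PD d (p * q)) k = coeff (PD d p * q + p * PD d q) k"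
    by (simp add: coeff_PD coeff_mult Dx_sum Dx_mult sum.distrib)
qed

lemma PD_const: "PD d [:c:] = [:Dx d c:]"
  by (rule poly_eqI) (simp add: coeff_PD coeff_pCons split: nat.split)

lemma PD_smult: "PD d (smult c p) = smult (Dx d c) p + smult c (PD d p)"
proof -
  have "PD d (smult c p) = PD d ([:c:] * p)" by simp
  also have "\<dots> = [:Dx d c:] * p + [:c:] * PD d p" by (simp only: PD_mult PD_const)
  finally show ?thesis by simp
qed

lemma PD_lin: "PD d [:- c, 1:] = [:- Dx d c:]"
proof (rule poly_eqI)
  fix k show "coeff (PD d [:- c, 1:]) k = coeff [:- Dx d c:] k"
  proof (cases k)
    case 0 thus ?thesis by (simp add: coeff_PD Dx_minus)
  next
    case (Suc m) thus ?thesis by (cases m) (simp_all add: coeff_PD Dx_one)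
  qed
qed

lemma PD_one: "PD d 1 = 0"
proof (rule poly_eqI)
  fix k show "coeff (PD d 1) k = coeff 0 k" by (cases "k = 0") (simp_all add: coeff_PD Dx_one)
qed

lemma PD_prod: "PD d (prod f A) = (\<Sum>x\<in>A. prod f (A - {x}) * PD d (f x))"
proof (induct A rule: infinite_finite_induct)
  case (infinite A)
  thus ?case by (simp add: PD_one)
next
  case empty thus ?case by (simp add: PD_one)
next
  case (insert a as)
  then have id: "prod f (insert a as) = f a * prod f as"
    "\<And>g. sum g (insert a as) = g a + sum g as"
    "insert a as - {a} = as"
    by auto
  have "prod f (insert a as - {b}) = f a * prod f (as - {b})" if "b \<in> as" for b
  proof -
    from \<open>a \<notin> as\<close> that have *: "insert a as - {b} = insert a (as - {b})"
      by auto
    show ?thesis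
      unfolding * by (subst prod.insert) (use insert in auto)
  qed
  then show ?case
    unfolding id PD_mult insert(3) sum_distrib_left
    by (auto simp add: ac_simps intro!: sum.cong)
qed

lemma PD_fpoly: "PD d (fpoly a n) = - (\<Sum>k<n. smult (Dx d (a k)) (eps a n k))"
  unfolding fpoly_def eps_def PD_prod PD_lin
  by (simp add: sum_negf[symmetric])

lemma PD_eps: "i < n \<Longrightarrow> PD d (eps a n i) = - (\<Sum>k\<in>{..<n} - {i}. smult (Dx d (a k)) (eps2 a n i k))"
proof -
  assume i: "i < n"
  have "PD d (eps a n i) = (\<Sum>k\<in>{..<n} - {i}. (\<Prod>j\<in>{..<n} - {i} - {k}. [:- a j, 1:]) * [:- Dx d (a k):])"
    unfolding eps_def PD_prod PD_lin by simp
  also have "\<dots> = - (\<Sum>k\<in>{..<n} - {i}. smult (Dx d (a k)) (eps2 a n i k))"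
    unfolding eps2_def sum_negf[symmetric]
    by (intro sum.cong) (auto simp: ac_simps intro!: arg_cong[where f="smult _"] prod.cong)
  finally show ?thesis .
qed




lemma smult_sum_right: "smult c (\<Sum>i\<in>A. f i) = (\<Sum>i\<in>A. smult c (f i))"
  by (induct A rule: infinite_finite_induct) (simp_all add: smult_add_right)

lemma pderiv_sum': "pderiv (\<Sum>i\<in>A. f i) = (\<Sum>i\<in>A. pderiv (f i))"
  by (induct A rule: infinite_finite_induct) (simp_all add: pderiv_add)

definition Tm :: "nat \<Rightarrow> (nat \<Rightarrow> complex fls) \<Rightarrow> nat \<Rightarrow> (nat \<Rightarrow> complex fls) \<Rightarrow> complex fls poly" where
  "Tm d a n u = (\<Sum>i<n. \<Sum>k\<in>{..<n} - {i}. smult (u i * (Dx d (a i) - Dx d (a k))) (eps2 a n i k))"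

definition bb :: "nat \<Rightarrow> (nat \<Rightarrow> complex fls) \<Rightarrow> nat \<Rightarrow> nat \<Rightarrow> complex fls" where
  "bb d a j k = (Dx d (a j) - Dx d (a k)) / (a j - a k)"

lemma bb_sym: "bb d a j k = bb d a k j"
  unfolding bb_def by (metis minus_diff_eq minus_divide_divide)

lemma PD_fpoly': "PD d (fpoly a n) = - comb a n (\<lambda>k. Dx d (a k))"
  unfolding PD_fpoly comb_def ..

lemma pderiv_fpoly': "pderiv (fpoly a n) = comb a n (\<lambda>k. 1)"
  unfolding pderiv_fpoly comb_def by simp

lemma M1:
  "comb a n u * PD d (fpoly a n) + comb a n (\<lambda>k. u k * Dx d (a k)) * pderiv (fpoly a n)
   = fpoly a n * Tm d a n u"
proof -
  let ?E = "eps a n"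
  have A: "comb a n u * PD d (fpoly a n) = - (\<Sum>i<n. \<Sum>k<n. smult (u i * Dx d (a k)) (?E i * ?E k))"
    unfolding comb_def PD_fpoly by (simp add: sum_product smult_smult mult.commute)
  have B: "comb a n (\<lambda>k. u k * Dx d (a k)) * pderiv (fpoly a n) = (\<Sum>i<n. \<Sum>k<n. smult (u i * Dx d (a i)) (?E i * ?E k))"
    unfolding comb_def pderiv_fpoly by (simp add: sum_product smult_smult)
  have C: "(\<Sum>k<n. smult (u i * (Dx d (a i) - Dx d (a k))) (?E i * ?E k)) =
      fpoly a n * (\<Sum>k\<in>{..<n} - {i}. smult (u i * (Dx d (a i) - Dx d (a k))) (eps2 a n i k))"
    if i: "i < n" for i
  proof -
    have "(\<Sum>k<n. smult (u i * (Dx d (a i) - Dx d (a k))) (?E i * ?E k)) =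
       smult (u i * (Dx d (a i) - Dx d (a i))) (?E i * ?E i) +
       (\<Sum>k\<in>{..<n} - {i}. smult (u i * (Dx d (a i) - Dx d (a k))) (?E i * ?E k))"
      using i by (subst sum.remove[of _ i]) auto
    also have "(\<Sum>k\<in>{..<n} - {i}. smult (u i * (Dx d (a i) - Dx d (a k))) (?E i * ?E k)) =
       (\<Sum>k\<in>{..<n} - {i}. fpoly a n * smult (u i * (Dx d (a i) - Dx d (a k))) (eps2 a n i k))"
      using i by (intro sum.cong) (auto simp: eps_mult)
    finally show ?thesis by (simp add: sum_distrib_left)
  qed
  have "comb a n u * PD d (fpoly a n) + comb a n (\<lambda>k. u k * Dx d (a k)) * pderiv (fpoly a n)
      = (\<Sum>i<n. \<Sum>k<n. smult (u i * (Dx d (a i) - Dx d (a k))) (?E i * ?E k))"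
    unfolding A B by (simp add: sum_subtractf[symmetric] right_diff_distrib smult_diff_left)
  also have "\<dots> = (\<Sum>i<n. fpoly a n * (\<Sum>k\<in>{..<n} - {i}. smult (u i * (Dx d (a i) - Dx d (a k))) (eps2 a n i k)))"
    by (intro sum.cong) (auto simp: C)
  also have "\<dots> = fpoly a n * Tm d a n u"
    unfolding Tm_def by (simp add: sum_distrib_left)
  finally show ?thesis .
qed

lemma M2:
  assumes dist: "\<forall>i<n. \<forall>j<n. i \<noteq> j \<longrightarrow> a i \<noteq> a j"
  shows "Tm d a n u = comb a n (\<lambda>j. \<Sum>k<n. bb d a j k * (u j - u k))"
proof -
  let ?E = "eps a n"
  have stepA: "(\<Sum>k\<in>{..<n} - {j}. smult (u j * (Dx d (a j) - Dx d (a k))) (eps2 a n j k)) =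
      (\<Sum>k<n. smult (bb d a j k * u j) (?E j - ?E k))" if j: "j < n" for j
  proof -
    have "(\<Sum>k<n. smult (bb d a j k * u j) (?E j - ?E k)) =
        smult (bb d a j j * u j) (?E j - ?E j) + (\<Sum>k\<in>{..<n} - {j}. smult (bb d a j k * u j) (?E j - ?E k))"
      using j by (subst sum.remove[of _ j]) auto
    also have "(\<Sum>k\<in>{..<n} - {j}. smult (bb d a j k * u j) (?E j - ?E k)) =
        (\<Sum>k\<in>{..<n} - {j}. smult (u j * (Dx d (a j) - Dx d (a k))) (eps2 a n j k))"
    proof (intro sum.cong refl)
      fix k assume k: "k \<in> {..<n} - {j}"
      hence ne: "a j - a k \<noteq> 0" using dist j by auto
      have eq: "bb d a j k * u j * (a j - a k) = u j * (Dx d (a j) - Dx d (a k))"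
        using ne unfolding bb_def by (simp add: field_simps)
      have "smult (bb d a j k * u j) (?E j - ?E k) = smult (bb d a j k * u j) (smult (a j - a k) (eps2 a n j k))"
        using k j by (simp add: eps_diff)
      also have "\<dots> = smult (bb d a j k * u j * (a j - a k)) (eps2 a n j k)"
        by (simp only: smult_smult)
      finally show "smult (bb d a j k * u j) (?E j - ?E k) = smult (u j * (Dx d (a j) - Dx d (a k))) (eps2 a n j k)"
        unfolding eq .
    qed
    finally show ?thesis by simp
  qed
  have "Tm d a n u = (\<Sum>j<n. \<Sum>k<n. smult (bb d a j k * u j) (?E j - ?E k))"
    unfolding Tm_def by (rule sum.cong[OF refl]) (simp add: stepA)
  also have "\<dots> = (\<Sum>j<n. \<Sum>k<n. smult (bb d a j k * u j) (?E j)) - (\<Sum>j<n. \<Sum>k<n. smult (bb d a j k * u j) (?E k))"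
    by (simp add: smult_diff_right sum_subtractf)
  also have "(\<Sum>j<n. \<Sum>k<n. smult (bb d a j k * u j) (?E k)) = (\<Sum>k<n. \<Sum>j<n. smult (bb d a j k * u j) (?E k))"
    by (rule sum.swap)
  also have "\<dots> = (\<Sum>j<n. \<Sum>k<n. smult (bb d a j k * u k) (?E j))"
    by (simp add: bb_sym)
  also have "(\<Sum>j<n. \<Sum>k<n. smult (bb d a j k * u j) (?E j)) - (\<Sum>j<n. \<Sum>k<n. smult (bb d a j k * u k) (?E j))
      = (\<Sum>j<n. \<Sum>k<n. smult (bb d a j k * (u j - u k)) (?E j))"
    by (simp add: sum_subtractf[symmetric] right_diff_distrib smult_diff_left)
  also have "\<dots> = comb a n (\<lambda>j. \<Sum>k<n. bb d a j k * (u j - u k))"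
    unfolding comb_def by (simp add: smult_sum)
  finally show ?thesis .
qed

lemma M3:
  "PD d (comb a n u) + pderiv (comb a n (\<lambda>k. u k * Dx d (a k))) = comb a n (\<lambda>j. Dx d (u j)) + Tm d a n u"
proof -
  have P1: "PD d (comb a n u) = comb a n (\<lambda>j. Dx d (u j)) -
      (\<Sum>i<n. \<Sum>k\<in>{..<n} - {i}. smult (u i * Dx d (a k)) (eps2 a n i k))"
  proof -
    have "PD d (comb a n u) = comb a n (\<lambda>j. Dx d (u j)) + (\<Sum>i<n. smult (u i) (PD d (eps a n i)))"
      unfolding comb_def PD_sum PD_smult by (simp add: sum.distrib)
    also have "(\<Sum>i<n. smult (u i) (PD d (eps a n i))) =
        - (\<Sum>i<n. \<Sum>k\<in>{..<n} - {i}. smult (u i * Dx d (a k)) (eps2 a n i k))"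
      by (simp add: PD_eps smult_sum_right smult_smult sum_negf)
    finally show ?thesis by simp
  qed
  have P2: "pderiv (comb a n (\<lambda>k. u k * Dx d (a k))) =
      (\<Sum>i<n. \<Sum>k\<in>{..<n} - {i}. smult (u i * Dx d (a i)) (eps2 a n i k))"
    unfolding comb_def pderiv_sum' pderiv_smult by (simp add: pderiv_eps smult_sum_right smult_smult)
  show ?thesis unfolding P1 P2 Tm_def
    by (simp add: right_diff_distrib smult_diff_left sum_subtractf)
qed




lemma comb_cong: "(\<And>i. i < n \<Longrightarrow> c i = c' i) \<Longrightarrow> comb a n c = comb a n c'"
  unfolding comb_def by (intro sum.cong) auto

lemma comb_add: "comb a n c + comb a n c' = comb a n (\<lambda>i. c i + c' i)"
  unfolding comb_def by (simp add: sum.distrib smult_add_left)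

lemma comb_minus: "- comb a n c = comb a n (\<lambda>i. - c i)"
  unfolding comb_def by (simp add: sum_negf)

lemma fpoly_nz: "fpoly a n \<noteq> 0"
  unfolding fpoly_def by (simp add: prod_zero_iff)

lemma coords_comb:
  assumes dist: "\<forall>i<n. \<forall>j<n. i \<noteq> j \<longrightarrow> a i \<noteq> a j" and supp: "\<forall>i. n \<le> i \<longrightarrow> c i = 0"
  shows "coords a n (comb a n c) = c"
  unfolding coords_def
proof (rule the_equality)
  show "(\<forall>i. n \<le> i \<longrightarrow> c i = 0) \<and> comb a n c = comb a n c" using supp by simp
next
  fix c' assume h: "(\<forall>i. n \<le> i \<longrightarrow> c' i = 0) \<and> comb a n c = comb a n c'"
  show "c' = c"
  proof
    fix i show "c' i = c i"
      using h supp comb_inj[OF dist, of c c' i] by (cases "i < n") auto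
  qed
qed

lemma Amat_conv:
  assumes i: "i < n"
  shows "(\<Sum>j<n. of_rat (Amat d a n i j) * V j) = (\<Sum>k<n. (of_rat (nu d (a i - a k)) :: complex) * (V i - V k))"
proof -
  let ?m = "\<lambda>k. (of_rat (nu d (a i - a k)) :: complex)"
  have "(\<Sum>j<n. of_rat (Amat d a n i j) * V j) = of_rat (Amat d a n i i) * V i + (\<Sum>j\<in>{..<n} - {i}. of_rat (Amat d a n i j) * V j)"
    using i by (subst sum.remove[of _ i]) auto
  also have "of_rat (Amat d a n i i) * V i = (\<Sum>k\<in>{..<n} - {i}. ?m k * V i)"
    by (simp add: Amat_def of_rat_sum sum_distrib_right)
  also have "(\<Sum>j\<in>{..<n} - {i}. of_rat (Amat d a n i j) * V j) = (\<Sum>k\<in>{..<n} - {i}. - (?m k * V k))"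
    by (intro sum.cong) (auto simp: Amat_def of_rat_minus)
  also have "(\<Sum>k\<in>{..<n} - {i}. ?m k * V i) + (\<Sum>k\<in>{..<n} - {i}. - (?m k * V k)) = (\<Sum>k\<in>{..<n} - {i}. ?m k * (V i - V k))"
    by (simp add: sum.distrib[symmetric] right_diff_distrib)
  also have "\<dots> = (\<Sum>k<n. ?m k * (V i - V k))"
    using i by (subst (2) sum.remove[of _ i]) auto
  finally show ?thesis .
qed

lemma Xd_nth: "fls_nth (fls_X_intpow (int d) * (g::complex fls)) k = fls_nth g (k - int d)"
  by (simp only: fls_X_intpow_times_conv_shift fls_shift_nth) simp




theorem mainTheorem12:
  fixes d n :: nat and a :: "nat \<Rightarrow> complex fls" and r :: rat and w :: "nat \<Rightarrow> complex fls"
  assumes "d > 0" and "n \<ge> 2"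
    and "\<forall>i<n. \<forall>j<n. i \<noteq> j \<longrightarrow> a i \<noteq> a j"
    and "\<forall>i<n. a i \<noteq> 0 \<longrightarrow> nu d (a i) > 0"
    and "inFr d n r w"
  shows "inFr d n r (nabla d a n w) \<and>
         (\<forall>i<n. in_r d n r (nabla d a n w) i =
            - in_r d n r w i - (1 + of_rat r) * AFinv d a n (in_r d n r w) i)"
proof -
  note d = assms(1) and n2 = assms(2) and dist = assms(3) and apos = assms(4) and wF = assms(5)
  have n0: "n > 0" using n2 by simp
  define m where "m j k = nu d (a j - a k)" for j k
  define beta where "beta j k = fls_X_intpow (int d) * bb d a j k" for j k
  have vb1: "vb 1 (a i)" if "i < n" for i
  proof (cases "a i = 0")
    case False
    hence "nu d (a i) > 0" using apos that by blast
    hence "fls_subdegree (a i) > 0" using d by (simp add: nu_def zero_less_divide_iff)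
    thus ?thesis by (auto simp: vb_def)
  qed (simp)
  have mpos: "\<forall>j<n. \<forall>k<n. j \<noteq> k \<longrightarrow> m j k > 0"
  proof (intro allI impI)
    fix j k assume jk: "j < n" "k < n" "j \<noteq> k"
    hence ne: "a j - a k \<noteq> 0" using dist by auto
    have "vb 1 (a j - a k)" using vb1 jk by (intro vb_diff) auto
    from vb_le_subdeg[OF ne this] have "1 \<le> fls_subdegree (a j - a k)" .
    thus "m j k > 0" using d by (simp add: m_def nu_def zero_less_divide_iff)
  qed
  have Ainj: "\<And>c. (\<Sum>k<n. c k) = 0 \<Longrightarrow> (\<forall>j<n. (\<Sum>k<n. of_rat (m j k) * (c j - c k)) = (0::complex)) \<Longrightarrow> \<forall>j<n. c j = 0"
    using A_inj[OF mpos] by blast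
  have dec: "\<forall>j<n. \<forall>k<n. vb 1 (beta j k - fls_const (of_rat (m j k)))"
  proof (intro allI impI)
    fix j k assume jk: "j < n" "k < n"
    show "vb 1 (beta j k - fls_const (of_rat (m j k)))"
    proof (cases "j = k")
      case True thus ?thesis by (simp add: beta_def bb_def m_def nu_def)
    next
      case False
      hence ne: "a j - a k \<noteq> 0" using dist jk by auto
      have "bb d a j k = Dx d (a j - a k) / (a j - a k)" by (simp add: bb_def Dx_diff)
      thus ?thesis using beta_decomp[OF d ne] by (simp add: beta_def m_def)
    qed
  qed
  have xB: "(\<Sum>k<n. beta j k * (c j - c k)) = fls_X_intpow (int d) * (\<Sum>k<n. bb d a j k * (c j - c k))" for j c
    by (simp add: beta_def sum_distrib_left mult.assoc)
  have Binj: "\<And>c. (\<Sum>k<n. c k) = 0 \<Longrightarrow> (\<forall>j<n. (\<Sum>k<n. bb d a j k * (c j - c k)) = 0) \<Longrightarrow> \<forall>j<n. c j = 0"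
  proof -
    fix c :: "nat \<Rightarrow> complex fls"
    assume sc: "(\<Sum>k<n. c k) = 0" and h: "\<forall>j<n. (\<Sum>k<n. bb d a j k * (c j - c k)) = 0"
    have h': "\<forall>j<n. (\<Sum>k<n. beta j k * (c j - c k)) = (\<lambda>_. 0) j" using h xB by simp
    have "\<forall>k<n. vb M (c k)" for M
      by (rule val_key[OF dec Ainj sc h']) simp_all
    thus "\<forall>j<n. c j = 0" using vb_all_zero by blast
  qed
  have sw: "(\<Sum>j<n. w j) = 0" using wF by (simp add: inFr_def)
  obtain u where usupp: "\<forall>i. n \<le> i \<longrightarrow> u i = 0" and su: "(\<Sum>k<n. u k) = 0"
    and Bu: "\<forall>j<n. (\<Sum>k<n. bb d a j k * (u j - u k)) = w j"
    using lap_solve[of "bb d a" n w, OF bb_sym n0 Binj sw] by blast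
  define v where "v = comb a n (\<lambda>k. u k * Dx d (a k))"
  have Tmu: "Tm d a n u = comb a n w"
    unfolding M2[OF dist] using Bu by (intro comb_cong) simp
  have sol: "isSol d a n w u v"
    unfolding isSol_def
  proof (intro conjI)
    show "\<forall>i. n \<le> i \<longrightarrow> u i = 0" by fact
    show "(\<Sum>i<n. u i) = 0" by fact
    show "degree v < n" unfolding v_def by (rule degree_comb[OF n0])
    show "comb a n u * map_poly (Dx d) (fpoly a n) + v * pderiv (fpoly a n) = comb a n w * fpoly a n"
      using M1[of a n u d] unfolding v_def PD_def Tmu by (simp add: mult.commute)
  qed
  have uniq: "u2 = u \<and> v2 = v" if s2: "isSol d a n w u2 v2" for u2 v2
  proof -
    from s2 have u2supp: "\<forall>i. n \<le> i \<longrightarrow> u2 i = 0" and su2: "(\<Sum>i<n. u2 i) = 0" and dv2: "degree v2 < n"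
      and eq2: "comb a n u2 * PD d (fpoly a n) + v2 * pderiv (fpoly a n) = comb a n w * fpoly a n"
      unfolding isSol_def PD_def by auto
    have v2eq: "v2 = comb a n (\<lambda>k. u2 k * Dx d (a k))"
    proof (rule poly_eqI_degree[of "a ` {..<n}"])
      fix x assume "x \<in> a ` {..<n}"
      then obtain j where j: "j < n" and x: "x = a j" by auto
      let ?e = "poly (eps a n j) (a j)"
      have e0: "?e \<noteq> 0" using poly_eps_self[OF dist j] .
      have "poly (comb a n u2 * PD d (fpoly a n) + v2 * pderiv (fpoly a n)) (a j) = 0"
        unfolding eq2 using poly_fpoly[OF j] by simp
      hence "u2 j * ?e * (- (Dx d (a j) * ?e)) + poly v2 (a j) * ?e = 0"
        unfolding PD_fpoly' pderiv_fpoly' by (simp add: poly_comb[OF j])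
      hence "?e * (poly v2 (a j) - u2 j * Dx d (a j) * ?e) = 0"
        by (simp add: algebra_simps)
      hence "poly v2 (a j) = u2 j * Dx d (a j) * ?e" using e0 by simp
      thus "poly v2 x = poly (comb a n (\<lambda>k. u2 k * Dx d (a k))) x"
        unfolding x poly_comb[OF j] by simp
    next
      have "card (a ` {..<n}) = n"
        using dist by (subst card_image) (auto simp: inj_on_def)
      thus "degree v2 < card (a ` {..<n})" "degree (comb a n (\<lambda>k. u2 k * Dx d (a k))) < card (a ` {..<n})"
        using dv2 degree_comb[OF n0] by auto
    qed
    have "fpoly a n * Tm d a n u2 = comb a n u2 * PD d (fpoly a n) + v2 * pderiv (fpoly a n)"
      using M1[of a n u2 d] unfolding v2eq[symmetric] by simp
    also have "\<dots> = fpoly a n * comb a n w" using eq2 by (simp only: mult.commute)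
    finally have "fpoly a n * Tm d a n u2 = fpoly a n * comb a n w" .
    hence "Tm d a n u2 = comb a n w" using fpoly_nz by simp
    hence Bu2: "\<forall>j<n. (\<Sum>k<n. bb d a j k * (u2 j - u2 k)) = w j"
      unfolding M2[OF dist] using comb_inj[OF dist] by blast
    define c where "c k = u2 k - u k" for k
    have "(\<Sum>k<n. c k) = 0" using su su2 by (simp add: c_def sum_subtractf)
    moreover have "\<forall>j<n. (\<Sum>k<n. bb d a j k * (c j - c k)) = 0"
    proof (intro allI impI)
      fix j assume j: "j < n"
      have "(\<Sum>k<n. bb d a j k * (c j - c k)) = (\<Sum>k<n. bb d a j k * (u2 j - u2 k)) - (\<Sum>k<n. bb d a j k * (u j - u k))"
        by (simp add: c_def sum_subtractf[symmetric] algebra_simps)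
      thus "(\<Sum>k<n. bb d a j k * (c j - c k)) = 0" using Bu Bu2 j by simp
    qed
    ultimately have "\<forall>j<n. c j = 0" by (rule Binj)
    have "u2 = u"
    proof (rule ext)
      fix k show "u2 k = u k"
      proof (cases "k < n")
        case True thus ?thesis using \<open>\<forall>j<n. c j = 0\<close> by (simp add: c_def)
      next
        case False thus ?thesis using usupp u2supp by simp
      qed
    qed
    thus ?thesis using v2eq v_def by simp
  qed
  have the: "(THE uv. isSol d a n w (fst uv) (snd uv)) = (u, v)"
  proof (rule the_equality)
    show "isSol d a n w (fst (u, v)) (snd (u, v))" using sol by simp
  next
    fix uv assume "isSol d a n w (fst uv) (snd uv)"
    from uniq[OF this] show "uv = (u, v)" by (cases uv) simp
  qed
  define nb where "nb j = (if j < n then - Dx d (u j) - w j else 0)" for j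
  have nab: "nabla d a n w = nb"
  proof -
    have "- map_poly (Dx d) (comb a n u) - pderiv v = - (PD d (comb a n u) + pderiv v)"
      by (simp add: PD_def)
    also have "\<dots> = - (comb a n (\<lambda>j. Dx d (u j)) + comb a n w)"
      unfolding v_def M3 Tmu ..
    also have "\<dots> = comb a n nb"
      unfolding comb_add comb_minus by (rule comb_cong) (simp add: nb_def)
    finally have "- map_poly (Dx d) (comb a n u) - pderiv v = comb a n nb" .
    thus ?thesis unfolding nabla_def the using coords_comb[OF dist, of nb] by (simp add: nb_def)
  qed
  define R where "R = \<lceil>r * of_nat d\<rceil>"
  have wvb: "vb R (w i)" if i: "i < n" for i
  proof (cases "w i = 0")
    case False
    hence "r \<le> nu d (w i)" using wF i by (simp add: inFr_def)
    hence "r * of_nat d \<le> of_int (fls_subdegree (w i))" using d by (simp add: nu_def pos_le_divide_eq)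
    hence "R \<le> fls_subdegree (w i)" unfolding R_def by (simp add: ceiling_le_iff)
    thus ?thesis using vb_subdeg vb_mono by blast
  qed simp
  have ueq: "\<forall>j<n. (\<Sum>k<n. beta j k * (u j - u k)) = fls_X_intpow (int d) * w j"
    using Bu xB by simp
  have gvb: "\<forall>j<n. vb (R + int d) (fls_X_intpow (int d) * w j)"
    using wvb by (auto simp: vb_def Xd_nth)
  have uvb: "\<forall>k<n. vb (R + int d) (u k)"
    by (rule val_key[OF dec Ainj su ueq gvb])
  have nbvb: "vb R (nb i)" if i: "i < n" for i
  proof -
    have "vb R (Dx d (u i))" using uvb i by (auto simp: vb_def Dx_nth)
    thus ?thesis using wvb[OF i] i unfolding nb_def by (auto intro: vb_diff vb_uminus)
  qed
  have part1: "inFr d n r nb"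
    unfolding inFr_def
  proof (intro conjI allI impI)
    have "(\<Sum>i<n. nb i) = - Dx d (\<Sum>i<n. u i) - (\<Sum>i<n. w i)"
      by (simp add: nb_def Dx_sum sum_subtractf sum_negf)
    thus "(\<Sum>i<n. nb i) = 0" using su sw by simp
  next
    fix i assume i: "i < n" and nz: "nb i \<noteq> 0"
    have "R \<le> fls_subdegree (nb i)" using vb_le_subdeg[OF nz nbvb[OF i]] .
    moreover have "r * of_nat d \<le> of_int R" unfolding R_def by simp
    ultimately have "r * of_nat d \<le> of_int (fls_subdegree (nb i))"
      by (meson of_int_le_iff order_trans)
    thus "r \<le> nu d (nb i)" using d by (simp add: nu_def pos_le_divide_eq)
  qed
  have AF_uniq: "AFinv d a n W = V"
    if Vs: "\<forall>i. n \<le> i \<longrightarrow> V i = 0" and Vsum: "(\<Sum>i<n. V i) = 0"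
      and VA: "\<forall>i<n. (\<Sum>j<n. of_rat (Amat d a n i j) * V j) = W i" for W V
    unfolding AFinv_def
  proof (rule the_equality)
    show "(\<forall>i. n \<le> i \<longrightarrow> V i = 0) \<and> (\<Sum>i<n. V i) = 0 \<and> (\<forall>i<n. (\<Sum>j<n. of_rat (Amat d a n i j) * V j) = W i)"
      using Vs Vsum VA by blast
  next
    fix V' assume h: "(\<forall>i. n \<le> i \<longrightarrow> V' i = 0) \<and> (\<Sum>i<n. V' i) = 0 \<and> (\<forall>i<n. (\<Sum>j<n. of_rat (Amat d a n i j) * V' j) = W i)"
    define c where "c k = V' k - V k" for k
    have "(\<Sum>k<n. c k) = 0" using h Vsum by (simp add: c_def sum_subtractf)
    moreover have "\<forall>j<n. (\<Sum>k<n. of_rat (m j k) * (c j - c k)) = (0::complex)"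
    proof (intro allI impI)
      fix j assume j: "j < n"
      have "(\<Sum>k<n. of_rat (m j k) * (c j - c k)) = (\<Sum>k<n. of_rat (m j k) * (V' j - V' k)) - (\<Sum>k<n. of_rat (m j k) * (V j - V k))"
        by (simp add: c_def sum_subtractf[symmetric] algebra_simps)
      also have "\<dots> = (\<Sum>k<n. of_rat (Amat d a n j k) * V' k) - (\<Sum>k<n. of_rat (Amat d a n j k) * V k)"
        unfolding m_def Amat_conv[OF j] ..
      also have "\<dots> = 0" using h VA j by simp
      finally show "(\<Sum>k<n. of_rat (m j k) * (c j - c k)) = (0::complex)" .
    qed
    ultimately have "\<forall>j<n. c j = 0" by (rule Ainj)
    show "V' = V"
    proof (rule ext)
      fix k show "V' k = V k"
      proof (cases "k < n")
        case True thus ?thesis using \<open>\<forall>j<n. c j = 0\<close> by (simp add: c_def)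
      next
        case False thus ?thesis using h Vs by simp
      qed
    qed
  qed
  have part2: "in_r d n r nb i = - in_r d n r w i - (1 + of_rat r) * AFinv d a n (in_r d n r w) i"
    if i: "i < n" for i
  proof (cases "of_int \<lfloor>r * of_nat d\<rfloor> = r * of_nat d")
    case False
    have xc: "xcoeff d r g = 0" for g unfolding xcoeff_def using False by (rule if_not_P)
    have W0: "in_r d n r w = (\<lambda>_. 0)" by (rule ext) (simp add: in_r_def xc)
    have "AFinv d a n (\<lambda>_. 0) = (\<lambda>_. 0)"
      by (rule AF_uniq) simp_all
    thus ?thesis using i unfolding W0 by (simp add: in_r_def xc)
  next
    case True
    have RR: "R = \<lfloor>r * of_nat d\<rfloor>" unfolding R_def using True by (metis ceiling_of_int)
    have rR: "r * of_nat d = of_int R" unfolding RR using True by (rule sym)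
    have xcT: "xcoeff d r g = fls_nth g R" for g unfolding xcoeff_def RR using True by (rule if_P)
    define V where "V k = (if k < n then fls_nth (u k) (R + int d) else 0)" for k
    have AF: "AFinv d a n (in_r d n r w) = V"
    proof (rule AF_uniq)
      show "\<forall>i. n \<le> i \<longrightarrow> V i = 0" by (simp add: V_def)
      show "(\<Sum>i<n. V i) = 0" using su by (simp add: V_def flip: fls_nth_sum)
      show "\<forall>i<n. (\<Sum>j<n. of_rat (Amat d a n i j) * V j) = in_r d n r w i"
      proof (intro allI impI)
        fix j assume j: "j < n"
        have "(\<Sum>k<n. of_rat (Amat d a n j k) * V k) = (\<Sum>k<n. of_rat (m j k) * (V j - V k))"
          unfolding m_def Amat_conv[OF j] ..
        also have "\<dots> = (\<Sum>k<n. of_rat (m j k) * (fls_nth (u j) (R + int d) - fls_nth (u k) (R + int d)))"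
          using j by (intro sum.cong) (auto simp: V_def)
        also have "\<dots> = fls_nth (\<Sum>k<n. beta j k * (u j - u k)) (R + int d)"
          using coef_lemma[OF dec uvb j] ..
        also have "\<dots> = fls_nth (w j) R" using ueq j by (simp add: Xd_nth)
        also have "\<dots> = in_r d n r w j" using j by (simp add: in_r_def xcT)
        finally show "(\<Sum>k<n. of_rat (Amat d a n j k) * V k) = in_r d n r w j" .
      qed
    qed
    have lhs: "in_r d n r nb i = - (of_int (R + int d) / of_nat d * V i) - fls_nth (w i) R"
      using i by (simp add: in_r_def xcT nb_def Dx_nth V_def)
    have rhs: "in_r d n r w i = fls_nth (w i) R"
      using i by (simp add: in_r_def xcT)
    have rc: "(of_rat r :: complex) = of_int R / of_nat d"
    proof -
      have "r = of_int R / of_nat d" using rR d by (simp add: eq_divide_eq)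
      thus ?thesis by (simp add: of_rat_divide)
    qed
    have "(1 + (of_rat r :: complex)) = of_int (R + int d) / of_nat d"
      unfolding rc using d by (simp add: field_simps)
    thus ?thesis unfolding lhs rhs AF by simp
  qed
  show ?thesis unfolding nab using part1 part2 by blast
qed


end
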